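(* Let $N\ge2$, $\Lambda^3=(-1,1)^3$, and let $\mathcal F$ be a diffeomorphism from $[-1,1]^3$ onto $\overline\Omega$, $\Omega=\mathcal F(\Lambda^3)\subset\mathbb R^3$. For $m,n,l\ge1$ define on $\Lambda^3$ $$\boldsymbol\Phi^1_{m,n,l}=\big(\psi_{m+1}(\xi_1)\phi_n(\xi_2)\phi_l(\xi_3),\,-\phi_m(\xi_1)\psi_{n+1}(\xi_2)\phi_l(\xi_3),\,0\big)^{\intercal},$$ $$\boldsymbol\Phi^2_{m,n,l}=\big(\psi_{m+1}(\xi_1)\phi_n(\xi_2)\phi_l(\xi_3),\,0,\,-\phi_m(\xi_1)\phi_n(\xi_2)\psi_{l+1}(\xi_3)\big)^{\intercal},$$ $$\boldsymbol\Phi^x_{n,l}=\big(0,\,\psi_{n+1}(\xi_2)\phi_l(\xi_3),\,-\phi_n(\xi_2)\psi_{l+1}(\xi_3)\big)^{\intercal},\quad \boldsymbol\Phi^y_{m,l}=\big(\psi_{m+1}(\xi_1)\phi_l(\xi_3),\,0,\,-\phi_m(\xi_1)\psi_{l+1}(\xi_3)\big)^{\intercal},$$ $$\boldsymbol\Phi^z_{m,n}=\big(\psi_{m+1}(\xi_1)\phi_n(\xi_2),\,-\phi_m(\xi_1)\psi_{n+1}(\xi_2),\,0\big)^{\intercal},$$ and let $\tilde{\boldsymbol\Phi}=\mathcal F^{\rm div}[\boldsymbol\Phi]$ for each of these. Then $$\boldsymbol H_{N,0}(\mathrm{div}0;\Omega):=\mathrm{span}\{\tilde{\boldsymbol\Phi}^1_{m,n,l},\tilde{\boldsymbol\Phi}^2_{m,n,l},\tilde{\boldsymbol\Phi}^x_{n,l},\tilde{\boldsymbol\Phi}^y_{m,l},\tilde{\boldsymbol\Phi}^z_{m,n}\}_{m,n,l=1}^{N-1}$$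 is a conforming divergence-free approximation space for $\boldsymbol H_0(\mathrm{div}0;\Omega)$; in particular each listed function has zero normal component on $\partial\Omega$ and zero divergence in $\Omega$.
   Context: $L_n$ Legendre polynomial; $P_n^{(\alpha,\beta)}$ classical Jacobi polynomial; $P_n^{(-1,-1)}(\xi)=\frac{\xi^2-1}{4}P_{n-2}^{(1,1)}(\xi)$ ($n\ge2$). $\psi_m(\xi)=\frac{\sqrt{2(2m-1)}}{m-1}P_m^{(-1,-1)}(\xi)$ ($m\ge2$), $\phi_n(\xi)=\sqrt{\frac{2n+1}{2}}L_n(\xi)$ ($n\ge0$). Piola transformation: $\mathcal F^{\rm div}[\boldsymbol\Phi](\boldsymbol x)=\frac{\partial_{\boldsymbol\xi}\boldsymbol x}{\det(\partial_{\boldsymbol\xi}\boldsymbol x)}\boldsymbol\Phi(\mathcal F^{-1}(\boldsymbol x))$, $\partial_{\boldsymbol\xi}\boldsymbol x$ the Jacobian of $\mathcal F$. $\boldsymbol H_0(\mathrm{div}0;\Omega)=\{\boldsymbol v\in L^2(\Omega)^3:\nabla\cdot\boldsymbol v\in L^2,\ \boldsymbol n\cdot\boldsymbol v|_{\partial\Omega}=0,\ \nabla\cdot\boldsymbol v=0\}$. *)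

theory Defs
  imports "HOL-Analysis.Analysis" "HOL-Analysis.Cross3"
begin

text \<open>Classical Jacobi polynomial (explicit formula, valid for all real parameters):
  P_n^(a,b)(x) = sum_{s=0}^n C(n+a, n-s) C(n+b, s) ((x-1)/2)^s ((x+1)/2)^(n-s).\<close>
definition jacobiP :: "real \<Rightarrow> real \<Rightarrow> nat \<Rightarrow> real \<Rightarrow> real" where
  "jacobiP a b n x =
     (\<Sum>s\<le>n. ((real n + a) gchoose (n - s)) * ((real n + b) gchoose s)
              * ((x - 1) / 2) ^ s * ((x + 1) / 2) ^ (n - s))"

definition legendre :: "nat \<Rightarrow> real \<Rightarrow> real" where
  "legendre n x = jacobiP 0 0 n x"

definition psi :: "nat \<Rightarrow> real \<Rightarrow> real" where
  "psi m x = sqrt (2 * (2 * real m - 1)) / (real m - 1) * jacobiP (-1) (-1) m x"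

definition phi :: "nat \<Rightarrow> real \<Rightarrow> real" where
  "phi n x = sqrt ((2 * real n + 1) / 2) * legendre n x"

definition Phi1 :: "nat \<Rightarrow> nat \<Rightarrow> nat \<Rightarrow> real^3 \<Rightarrow> real^3" where
  "Phi1 m n l \<xi> = vector [psi (m+1) (\<xi>$1) * phi n (\<xi>$2) * phi l (\<xi>$3),
                          - phi m (\<xi>$1) * psi (n+1) (\<xi>$2) * phi l (\<xi>$3), 0]"

definition Phi2 :: "nat \<Rightarrow> nat \<Rightarrow> nat \<Rightarrow> real^3 \<Rightarrow> real^3" where
  "Phi2 m n l \<xi> = vector [psi (m+1) (\<xi>$1) * phi n (\<xi>$2) * phi l (\<xi>$3), 0,
                          - phi m (\<xi>$1) * phi n (\<xi>$2) * psi (l+1) (\<xi>$3)]"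

definition PhiX :: "nat \<Rightarrow> nat \<Rightarrow> real^3 \<Rightarrow> real^3" where
  "PhiX n l \<xi> = vector [0, psi (n+1) (\<xi>$2) * phi l (\<xi>$3),
                         - phi n (\<xi>$2) * psi (l+1) (\<xi>$3)]"

definition PhiY :: "nat \<Rightarrow> nat \<Rightarrow> real^3 \<Rightarrow> real^3" where
  "PhiY m l \<xi> = vector [psi (m+1) (\<xi>$1) * phi l (\<xi>$3), 0,
                         - phi m (\<xi>$1) * psi (l+1) (\<xi>$3)]"

definition PhiZ :: "nat \<Rightarrow> nat \<Rightarrow> real^3 \<Rightarrow> real^3" where
  "PhiZ m n \<xi> = vector [psi (m+1) (\<xi>$1) * phi n (\<xi>$2),
                         - phi m (\<xi>$1) * psi (n+1) (\<xi>$2), 0]"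

abbreviation cube :: "(real^3) set" where "cube \<equiv> cbox (- 1) 1"
abbreviation open_cube :: "(real^3) set" where "open_cube \<equiv> box (- 1) 1"

fun Ck_on :: "nat \<Rightarrow> (real^3) set \<Rightarrow> (real^3 \<Rightarrow> real) \<Rightarrow> bool" where
  "Ck_on 0 U g = continuous_on U g"
| "Ck_on (Suc k) U g = (continuous_on U g \<and> (\<forall>x\<in>U. g differentiable (at x)) \<and>
      (\<forall>i. Ck_on k U (\<lambda>x. frechet_derivative g (at x) (axis i 1))))"

definition smooth_on :: "(real^3) set \<Rightarrow> (real^3 \<Rightarrow> real^3) \<Rightarrow> bool" where
  "smooth_on U F = (\<forall>k i. Ck_on k U (\<lambda>x. F x $ i))"

definition jac :: "(real^3 \<Rightarrow> real^3) \<Rightarrow> real^3 \<Rightarrow> real^3^3" where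
  "jac F \<xi> = matrix (frechet_derivative F (at \<xi>))"

definition piola :: "(real^3 \<Rightarrow> real^3) \<Rightarrow> (real^3 \<Rightarrow> real^3) \<Rightarrow> real^3 \<Rightarrow> real^3" where
  "piola F Phi x = (let \<xi> = inv_into cube F x in
                      (1 / det (jac F \<xi>)) *\<^sub>R (jac F \<xi> *v Phi \<xi>))"

definition divergence :: "(real^3 \<Rightarrow> real^3) \<Rightarrow> real^3 \<Rightarrow> real" where
  "divergence v x = (\<Sum>i\<in>UNIV. frechet_derivative v (at x) (axis i 1) $ i)"

definition basisN :: "nat \<Rightarrow> (real^3 \<Rightarrow> real^3) \<Rightarrow> (real^3 \<Rightarrow> real^3) set" where
  "basisN N F = piola F ` (
      {Phi1 m n l | m n l. m \<in> {1..N-1} \<and> n \<in> {1..N-1} \<and> l \<in> {1..N-1}}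
    \<union> {Phi2 m n l | m n l. m \<in> {1..N-1} \<and> n \<in> {1..N-1} \<and> l \<in> {1..N-1}}
    \<union> {PhiX n l | n l. n \<in> {1..N-1} \<and> l \<in> {1..N-1}}
    \<union> {PhiY m l | m l. m \<in> {1..N-1} \<and> l \<in> {1..N-1}}
    \<union> {PhiZ m n | m n. m \<in> {1..N-1} \<and> n \<in> {1..N-1}})"

definition fspan :: "(real^3 \<Rightarrow> real^3) set \<Rightarrow> (real^3 \<Rightarrow> real^3) set" where
  "fspan B = {v. \<exists>S c. finite S \<and> S \<subseteq> B \<and> v = (\<lambda>x. \<Sum>b\<in>S. c b *\<^sub>R b x)}"

definition HN0_div0 :: "nat \<Rightarrow> (real^3 \<Rightarrow> real^3) \<Rightarrow> (real^3 \<Rightarrow> real^3) set" where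
  "HN0_div0 N F = fspan (basisN N F)"

end

theory Submission
  imports Defs
begin


lemma coef_id:
  assumes "t \<le> m"
  shows "(m choose (m - t)) * (m choose Suc t) * Suc t + (m choose (Suc m - t)) * (m choose t) * (Suc m - t)
       = m * ((m choose (m - t)) * (m choose t))"
proof -
  have a: "(m choose Suc t) * Suc t = (m - t) * (m choose t)"
    by (metis binomial_absorb_comp binomial_absorption mult.commute)
  have b: "(m choose (Suc m - t)) * (Suc m - t) = t * (m choose (m - t))"
  proof (cases t)
    case 0 then show ?thesis by simp
  next
    case (Suc t')
    then have "Suc m - t = Suc (m - t)" using assms by simp
    then have "(m choose (Suc m - t)) * (Suc m - t) = m * ((m - 1) choose (m - t))"
      by (metis binomial_absorption mult.commute)
    also have "... = (m - (m - t)) * (m choose (m - t))"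
      by (metis binomial_absorb_comp)
    also have "m - (m - t) = t" using assms by simp
    finally show ?thesis .
  qed
  have "(m choose (m - t)) * (m choose Suc t) * Suc t + (m choose (Suc m - t)) * (m choose t) * (Suc m - t)
     = (m choose (m - t)) * ((m choose Suc t) * Suc t) + (m choose t) * ((m choose (Suc m - t)) * (Suc m - t))"
    by (simp add: algebra_simps)
  also have "... = (m choose (m - t)) * (m choose t) * ((m - t) + t)"
    unfolding a b by (simp add: algebra_simps)
  also have "... = m * ((m choose (m - t)) * (m choose t))" using assms by simp
  finally show ?thesis .
qed

lemma jacobi_m1_deriv:
  "((\<lambda>x. jacobiP (-1) (-1) (Suc m) x) has_real_derivative (real m / 2 * legendre m x)) (at x)"
proof -
  define u where "u = (x - 1) / 2"
  define w where "w = (x + 1) / 2"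
  have g: "\<And>k. (real (Suc m) + -1) gchoose k = real (m choose k)"
    by (simp add: binomial_gbinomial)
  have g0: "\<And>k. (real m + 0) gchoose k = real (m choose k)"
    by (simp add: binomial_gbinomial)
  have f: "(\<lambda>x. jacobiP (-1) (-1) (Suc m) x) = (\<lambda>x. \<Sum>s\<le>Suc m. real (m choose (Suc m - s)) * real (m choose s)
              * ((x - 1) / 2) ^ s * ((x + 1) / 2) ^ (Suc m - s))"
    by (simp add: jacobiP_def flip: binomial_gbinomial)
  have D: "((\<lambda>x. \<Sum>s\<le>Suc m. real (m choose (Suc m - s)) * real (m choose s)
              * ((x - 1) / 2) ^ s * ((x + 1) / 2) ^ (Suc m - s)) has_real_derivative
          (\<Sum>s\<le>Suc m. real (m choose (Suc m - s)) * real (m choose s) *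
             (real s * u ^ (s - 1) / 2 * w ^ (Suc m - s) + u ^ s * (real (Suc m - s) * w ^ (Suc m - s - 1) / 2)))) (at x)"
    unfolding u_def w_def
    apply (rule DERIV_sum)
    apply (rule derivative_eq_intros refl | simp)+
    apply (simp add: algebra_simps)
    done
  define c where "c s = real (m choose (Suc m - s)) * real (m choose s)" for s
  have S: "(\<Sum>s\<le>Suc m. real (m choose (Suc m - s)) * real (m choose s) *
             (real s * u ^ (s - 1) / 2 * w ^ (Suc m - s) + u ^ s * (real (Suc m - s) * w ^ (Suc m - s - 1) / 2)))
      = (\<Sum>s\<le>Suc m. c s * real s * u ^ (s - 1) * w ^ (Suc m - s) / 2)
        + (\<Sum>s\<le>Suc m. c s * real (Suc m - s) * u ^ s * w ^ (Suc m - s - 1) / 2)"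
    unfolding c_def sum.distrib[symmetric] by (rule sum.cong) (auto simp: algebra_simps)
  have S1: "(\<Sum>s\<le>Suc m. c s * real s * u ^ (s - 1) * w ^ (Suc m - s) / 2)
      = (\<Sum>t\<le>m. c (Suc t) * real (Suc t) * u ^ t * w ^ (m - t) / 2)"
    by (subst sum.atMost_Suc_shift) simp
  have S2: "(\<Sum>s\<le>Suc m. c s * real (Suc m - s) * u ^ s * w ^ (Suc m - s - 1) / 2)
      = (\<Sum>t\<le>m. c t * real (Suc m - t) * u ^ t * w ^ (m - t) / 2)"
    by (subst sum.atMost_Suc) simp
  have L: "real m / 2 * legendre m x = (\<Sum>t\<le>m. real m / 2 * (real (m choose (m - t)) * real (m choose t)) * u ^ t * w ^ (m - t))"
    unfolding legendre_def jacobiP_def u_def w_def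
    by (simp add: sum_distrib_left algebra_simps flip: binomial_gbinomial)
  have T: "c (Suc t) * real (Suc t) + c t * real (Suc m - t) = real m * (real (m choose (m - t)) * real (m choose t))"
    if "t \<le> m" for t
  proof -
    have e: "real (m choose (m - t)) * real (m choose Suc t) * real (Suc t) + real (m choose (Suc m - t)) * real (m choose t) * real (Suc m - t) = real m * (real (m choose (m - t)) * real (m choose t))"
      using arg_cong[OF coef_id[OF that], of real] by (simp only: of_nat_add of_nat_mult)
    then show ?thesis unfolding c_def by (simp only: ac_simps diff_Suc_Suc)
  qed
  have "(\<Sum>t\<le>m. c (Suc t) * real (Suc t) * u ^ t * w ^ (m - t) / 2) + (\<Sum>t\<le>m. c t * real (Suc m - t) * u ^ t * w ^ (m - t) / 2)
      = (\<Sum>t\<le>m. (c (Suc t) * real (Suc t) + c t * real (Suc m - t)) * u ^ t * w ^ (m - t) / 2)"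
    unfolding sum.distrib[symmetric] by (rule sum.cong) (simp_all add: field_simps)
  also have "... = real m / 2 * legendre m x"
    unfolding L
  proof (rule sum.cong[OF refl])
    fix t assume "t \<in> {..m}"
    then have "t \<le> m" by simp
    show "(c (Suc t) * real (Suc t) + c t * real (Suc m - t)) * u ^ t * w ^ (m - t) / 2 =
         real m / 2 * (real (m choose (m - t)) * real (m choose t)) * u ^ t * w ^ (m - t)"
      unfolding T[OF \<open>t \<le> m\<close>] by simp
  qed
  finally have E: "(\<Sum>t\<le>m. c (Suc t) * real (Suc t) * u ^ t * w ^ (m - t) / 2) + (\<Sum>t\<le>m. c t * real (Suc m - t) * u ^ t * w ^ (m - t) / 2) = real m / 2 * legendre m x" .
  show ?thesis unfolding f using D unfolding S S1 S2 E .
qed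



lemma line_deriv:
  fixes g :: "real^3 \<Rightarrow> real"
  assumes "(g has_derivative Dg) (at (z + s *\<^sub>R a))"
  shows "((\<lambda>s. g (z + s *\<^sub>R a)) has_real_derivative Dg a) (at s)"
proof -
  have l: "((\<lambda>s. z + s *\<^sub>R a) has_derivative (\<lambda>h. h *\<^sub>R a)) (at s)"
    by (auto intro!: derivative_eq_intros)
  have "((g \<circ> (\<lambda>s. z + s *\<^sub>R a)) has_derivative (Dg \<circ> (\<lambda>h. h *\<^sub>R a))) (at s)"
    by (rule diff_chain_at[OF l]) (use assms in simp)
  moreover have "Dg \<circ> (\<lambda>h. h *\<^sub>R a) = (*) (Dg a)"
    using assms has_derivative_bounded_linear[OF assms]
    by (auto simp: fun_eq_iff linear_simps bounded_linear.linear)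
  ultimately show ?thesis
    unfolding has_field_derivative_def o_def by simp
qed

lemma dist_xv: "dist x (x + v) = norm (v::'a::real_normed_vector)"
  by (simp add: dist_norm)

lemma delta_formula:
  fixes g :: "real^3 \<Rightarrow> real"
  defines "p \<equiv> \<lambda>c y. frechet_derivative g (at y) (axis c 1)"
  assumes U: "cball x (2 * t) \<subseteq> U" and t: "t > 0"
    and dg: "\<And>y. y \<in> U \<Longrightarrow> g differentiable at y"
    and dp: "\<And>c y. y \<in> U \<Longrightarrow> p c differentiable at y"
  shows "\<exists>y \<in> cball x (2 * t). g (x + t *\<^sub>R axis j 1 + t *\<^sub>R axis k 1) - g (x + t *\<^sub>R axis j 1)
            - g (x + t *\<^sub>R axis k 1) + g x = t * t * frechet_derivative (p j) (at y) (axis k 1)"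
proof -
  define a :: "real^3" where "a = axis j 1"
  define b :: "real^3" where "b = axis k 1"
  have inU: "x + s *\<^sub>R a + r *\<^sub>R b \<in> U" if "0 \<le> s" "s \<le> t" "0 \<le> r" "r \<le> t" for s r
  proof -
    have "norm (s *\<^sub>R a + r *\<^sub>R b) \<le> norm (s *\<^sub>R a) + norm (r *\<^sub>R b)" by (rule norm_triangle_ineq)
    also have "... = s + r" using that by (simp add: a_def b_def)
    moreover have "dist x (x + s *\<^sub>R a + r *\<^sub>R b) = norm (s *\<^sub>R a + r *\<^sub>R b)"
      using dist_xv[of x "s *\<^sub>R a + r *\<^sub>R b"] by (simp add: add.assoc)
    ultimately have "dist x (x + s *\<^sub>R a + r *\<^sub>R b) \<le> 2 * t" using that by linarith
    then show ?thesis using U by auto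
  qed
  define \<phi> where "\<phi> s = g (x + t *\<^sub>R b + s *\<^sub>R a) - g (x + s *\<^sub>R a)" for s
  have d\<phi>: "DERIV \<phi> s :> p j (x + t *\<^sub>R b + s *\<^sub>R a) - p j (x + s *\<^sub>R a)" if "0 \<le> s" "s \<le> t" for s
  proof -
    have u1: "x + t *\<^sub>R b + s *\<^sub>R a \<in> U" using inU[of s t] that t by (simp add: algebra_simps)
    have u2: "x + s *\<^sub>R a \<in> U" using inU[of s 0] that t by simp
    have "((\<lambda>s. g (x + t *\<^sub>R b + s *\<^sub>R a)) has_real_derivative p j (x + t *\<^sub>R b + s *\<^sub>R a)) (at s)"
      using line_deriv[OF frechet_derivative_works[THEN iffD1, OF dg[OF u1]]] unfolding p_def a_def .
    moreover have "((\<lambda>s. g (x + s *\<^sub>R a)) has_real_derivative p j (x + s *\<^sub>R a)) (at s)"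
      using line_deriv[OF frechet_derivative_works[THEN iffD1, OF dg[OF u2]]] unfolding p_def a_def .
    ultimately show ?thesis unfolding \<phi>_def by (rule DERIV_diff)
  qed
  obtain \<sigma> where \<sigma>: "0 < \<sigma>" "\<sigma> < t" "\<phi> t - \<phi> 0 = (t - 0) * (p j (x + t *\<^sub>R b + \<sigma> *\<^sub>R a) - p j (x + \<sigma> *\<^sub>R a))"
    using MVT2[OF t d\<phi>] by blast
  define \<psi> where "\<psi> r = p j (x + \<sigma> *\<^sub>R a + r *\<^sub>R b)" for r
  have d\<psi>: "DERIV \<psi> r :> frechet_derivative (p j) (at (x + \<sigma> *\<^sub>R a + r *\<^sub>R b)) b" if "0 \<le> r" "r \<le> t" for r
  proof -
    have u: "x + \<sigma> *\<^sub>R a + r *\<^sub>R b \<in> U" using inU[of \<sigma> r] that \<sigma> by simp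
    show ?thesis unfolding \<psi>_def
      using line_deriv[OF frechet_derivative_works[THEN iffD1, OF dp[OF u]]] .
  qed
  obtain \<tau> where \<tau>: "0 < \<tau>" "\<tau> < t" "\<psi> t - \<psi> 0 = (t - 0) * frechet_derivative (p j) (at (x + \<sigma> *\<^sub>R a + \<tau> *\<^sub>R b)) b"
    using MVT2[OF t d\<psi>] by blast
  define y where "y = x + \<sigma> *\<^sub>R a + \<tau> *\<^sub>R b"
  have "y \<in> cball x (2 * t)"
  proof -
    have "norm (\<sigma> *\<^sub>R a + \<tau> *\<^sub>R b) \<le> norm (\<sigma> *\<^sub>R a) + norm (\<tau> *\<^sub>R b)" by (rule norm_triangle_ineq)
    also have "... = \<sigma> + \<tau>" using \<sigma> \<tau> by (simp add: a_def b_def)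
    moreover have "dist x y = norm (\<sigma> *\<^sub>R a + \<tau> *\<^sub>R b)"
      using dist_xv[of x "\<sigma> *\<^sub>R a + \<tau> *\<^sub>R b"] by (simp add: y_def add.assoc)
    ultimately show ?thesis using \<sigma> \<tau> unfolding mem_cball by linarith
  qed
  moreover have "g (x + t *\<^sub>R a + t *\<^sub>R b) - g (x + t *\<^sub>R a) - g (x + t *\<^sub>R b) + g x
     = t * t * frechet_derivative (p j) (at y) b"
  proof -
    have "g (x + t *\<^sub>R a + t *\<^sub>R b) - g (x + t *\<^sub>R a) - g (x + t *\<^sub>R b) + g x = \<phi> t - \<phi> 0"
      unfolding \<phi>_def by (simp add: add_ac)
    also have "... = t * (\<psi> t - \<psi> 0)"
      using \<sigma>(3) unfolding \<psi>_def by (simp add: add_ac)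
    also have "... = t * t * frechet_derivative (p j) (at y) b"
      using \<tau>(3) unfolding y_def by simp
    finally show ?thesis .
  qed
  ultimately show ?thesis unfolding a_def b_def by blast
qed

lemma clairaut:
  fixes g :: "real^3 \<Rightarrow> real"
  defines "p \<equiv> \<lambda>c y. frechet_derivative g (at y) (axis c 1)"
  assumes U: "open U" "x \<in> U"
    and dg: "\<And>y. y \<in> U \<Longrightarrow> g differentiable at y"
    and dp: "\<And>c y. y \<in> U \<Longrightarrow> p c differentiable at y"
    and cq: "\<And>c e. continuous_on U (\<lambda>y. frechet_derivative (p c) (at y) (axis e 1))"
  shows "frechet_derivative (p j) (at x) (axis k 1) = frechet_derivative (p k) (at x) (axis j 1)"
proof (rule ccontr)
  define q where "q c e y = frechet_derivative (p c) (at y) (axis e 1)" for c e y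
  assume ne: "frechet_derivative (p j) (at x) (axis k 1) \<noteq> frechet_derivative (p k) (at x) (axis j 1)"
  define \<epsilon> where "\<epsilon> = \<bar>q j k x - q k j x\<bar> / 2"
  have \<epsilon>: "\<epsilon> > 0" using ne by (simp add: \<epsilon>_def q_def)
  obtain r where r: "r > 0" "ball x r \<subseteq> U" using U open_contains_ball by blast
  have cont: "\<exists>\<delta>>0. \<forall>y. dist y x < \<delta> \<longrightarrow> \<bar>q c e y - q c e x\<bar> < \<epsilon>" for c e
  proof -
    have "isCont (q c e) x"
      using cq[of c e] U continuous_on_eq_continuous_at unfolding q_def by blast
    then show ?thesis using \<epsilon> unfolding continuous_at_eps_delta dist_real_def by blast
  qed
  obtain \<delta>1 where d1: "\<delta>1 > 0" "\<And>y. dist y x < \<delta>1 \<Longrightarrow> \<bar>q j k y - q j k x\<bar> < \<epsilon>" using cont by blast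
  obtain \<delta>2 where d2: "\<delta>2 > 0" "\<And>y. dist y x < \<delta>2 \<Longrightarrow> \<bar>q k j y - q k j x\<bar> < \<epsilon>" using cont by blast
  define t where "t = min r (min \<delta>1 \<delta>2) / 4"
  have t: "t > 0" using r d1 d2 by (simp add: t_def)
  have cb: "cball x (2 * t) \<subseteq> U"
  proof
    fix y assume "y \<in> cball x (2 * t)"
    then have "dist x y < r" using t r unfolding t_def by (auto simp: min_def split: if_splits)
    then show "y \<in> U" using r by auto
  qed
  have close: "dist y x < \<delta>1" "dist y x < \<delta>2" if "y \<in> cball x (2 * t)" for y
    using that t d1 d2 unfolding t_def by (auto simp: dist_commute min_def split: if_splits)
  obtain y1 where y1: "y1 \<in> cball x (2 * t)" "g (x + t *\<^sub>R axis j 1 + t *\<^sub>R axis k 1) - g (x + t *\<^sub>R axis j 1)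
            - g (x + t *\<^sub>R axis k 1) + g x = t * t * q j k y1"
    using delta_formula[OF cb t dg, of j k] dp unfolding q_def p_def by blast
  obtain y2 where y2: "y2 \<in> cball x (2 * t)" "g (x + t *\<^sub>R axis k 1 + t *\<^sub>R axis j 1) - g (x + t *\<^sub>R axis k 1)
            - g (x + t *\<^sub>R axis j 1) + g x = t * t * q k j y2"
    using delta_formula[OF cb t dg, of k j] dp unfolding q_def p_def by blast
  have "t * t * q j k y1 = t * t * q k j y2"
    using y1(2) y2(2) by (simp add: algebra_simps)
  then have eq: "q j k y1 = q k j y2" using t by simp
  have "\<bar>q j k x - q k j x\<bar> \<le> \<bar>q j k y1 - q j k x\<bar> + \<bar>q k j y2 - q k j x\<bar>"
    using eq by linarith
  also have "... < \<epsilon> + \<epsilon>" using d1(2)[OF close(1)[OF y1(1)]] d2(2)[OF close(2)[OF y2(1)]] by linarith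
  finally show False unfolding \<epsilon>_def by simp
qed




definition adj3 :: "real^3^3 \<Rightarrow> real^3^3" where
  "adj3 A = vector [
     vector [A$2$2 * A$3$3 - A$2$3 * A$3$2, A$1$3 * A$3$2 - A$1$2 * A$3$3, A$1$2 * A$2$3 - A$1$3 * A$2$2],
     vector [A$2$3 * A$3$1 - A$2$1 * A$3$3, A$1$1 * A$3$3 - A$1$3 * A$3$1, A$1$3 * A$2$1 - A$1$1 * A$2$3],
     vector [A$2$1 * A$3$2 - A$2$2 * A$3$1, A$1$2 * A$3$1 - A$1$1 * A$3$2, A$1$1 * A$2$2 - A$1$2 * A$2$1]]"

definition detD :: "real^3^3 \<Rightarrow> real^3^3 \<Rightarrow> real" where
  "detD A C = (\<Sum>i\<in>UNIV. \<Sum>k\<in>UNIV. adj3 A $ k $ i * C $ i $ k)"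

lemma adj3_left: "adj3 A ** A = det A *\<^sub>R mat 1"
  by (simp add: vec_eq_iff forall_3 matrix_matrix_mult_def sum_3 adj3_def det_3 mat_def algebra_simps)

lemma adj3_right: "A ** adj3 A = det A *\<^sub>R mat 1"
  by (simp add: vec_eq_iff forall_3 matrix_matrix_mult_def sum_3 adj3_def det_3 mat_def algebra_simps)

lemma scaleR_mm_left: "((c::real) *\<^sub>R X) ** (A::real^3^3) = c *\<^sub>R (X ** A)"
  by (simp add: matrix_matrix_mult_def vec_eq_iff sum_distrib_left mult.assoc)

lemma scaleR_mm_right: "(A::real^3^3) ** ((c::real) *\<^sub>R X) = c *\<^sub>R (A ** X)"
  by (simp add: matrix_matrix_mult_def vec_eq_iff sum_distrib_left algebra_simps)

lemma inv_left: "det A \<noteq> 0 \<Longrightarrow> ((1 / det A) *\<^sub>R adj3 A) ** A = mat 1"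
  by (simp add: adj3_left scaleR_mm_left)

lemma inv_right: "det A \<noteq> 0 \<Longrightarrow> A ** ((1 / det A) *\<^sub>R adj3 A) = mat 1"
  by (simp add: adj3_right scaleR_mm_right)

lemma piola_alg:
  fixes A :: "real^3^3" and Q :: "3 \<Rightarrow> real^3^3" and ph :: "real^3" and M :: "real^3^3"
  assumes d: "det A \<noteq> 0" and sym: "\<And>i j k. Q k $ i $ j = Q j $ i $ k"
  defines "B \<equiv> (1 / det A) *\<^sub>R adj3 A"
  shows "(\<Sum>i\<in>UNIV. \<Sum>k\<in>UNIV. B$k$i * ( - (detD A (Q k)) / (det A)^2 * (A *v ph)$i
            + (1 / det A) * ((Q k *v ph)$i + (A *v (column k M))$i)))
         = (1 / det A) * (\<Sum>j\<in>UNIV. M$j$j)"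
proof -
  have BA: "B ** A = mat 1" unfolding B_def using inv_left[OF d] .
  have mv: "(\<Sum>i\<in>UNIV. B$k$i * v$i) = (B *v v)$k" for k v
    by (simp add: matrix_vector_mult_def)
  have "(\<Sum>i\<in>UNIV. \<Sum>k\<in>UNIV. B$k$i * ( - (detD A (Q k)) / (det A)^2 * (A *v ph)$i
            + (1 / det A) * ((Q k *v ph)$i + (A *v (column k M))$i)))
      = (\<Sum>k\<in>UNIV. - (detD A (Q k)) / (det A)^2 * (\<Sum>i\<in>UNIV. B$k$i * (A *v ph)$i)
            + (1 / det A) * (\<Sum>i\<in>UNIV. B$k$i * (Q k *v ph)$i) + (1 / det A) * (\<Sum>i\<in>UNIV. B$k$i * (A *v (column k M))$i))"
  proof -
    have inner: "(\<Sum>i\<in>UNIV. B$k$i * (a * u$i + b * (v$i + w$i))) = a * (\<Sum>i\<in>UNIV. B$k$i * u$i) + b * (\<Sum>i\<in>UNIV. B$k$i * v$i) + b * (\<Sum>i\<in>UNIV. B$k$i * w$i)"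
      for k a b and u v w :: "real^3"
      by (simp add: sum.distrib sum_distrib_left algebra_simps)
    show ?thesis by (subst sum.swap) (simp only: inner)
  qed
  also have "... = (\<Sum>k\<in>UNIV. - (detD A (Q k)) / (det A)^2 * ph$k
            + (1 / det A) * (B *v (Q k *v ph))$k + (1 / det A) * M$k$k)"
    unfolding mv by (simp add: matrix_vector_mul_assoc BA column_def)
  also have "... = (\<Sum>k\<in>UNIV. - (detD A (Q k)) / (det A)^2 * ph$k) + (\<Sum>k\<in>UNIV. (1 / det A) * (B *v (Q k *v ph))$k)
            + (1 / det A) * (\<Sum>j\<in>UNIV. M$j$j)"
    by (simp add: sum.distrib sum_distrib_left sum_subtractf sum_negf)
  also have "(\<Sum>k\<in>UNIV. (1 / det A) * (B *v (Q k *v ph))$k) = (\<Sum>k\<in>UNIV. (detD A (Q k)) / (det A)^2 * ph$k)"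
  proof -
    have "(\<Sum>k\<in>UNIV. (B *v (Q k *v ph))$k) = (\<Sum>k\<in>UNIV. \<Sum>i\<in>UNIV. \<Sum>j\<in>UNIV. B$k$i * Q k $ i $ j * ph $ j)"
      by (simp add: matrix_vector_mult_def sum_distrib_left mult.assoc)
    also have "... = (\<Sum>k\<in>UNIV. \<Sum>i\<in>UNIV. \<Sum>j\<in>UNIV. B$k$i * Q j $ i $ k * ph $ j)"
      by (intro sum.cong refl) (subst sym, rule refl)
    also have "... = (\<Sum>k\<in>UNIV. \<Sum>j\<in>UNIV. \<Sum>i\<in>UNIV. B$k$i * Q j $ i $ k * ph $ j)"
      by (rule sum.cong[OF refl], rule sum.swap)
    also have "... = (\<Sum>j\<in>UNIV. \<Sum>k\<in>UNIV. \<Sum>i\<in>UNIV. B$k$i * Q j $ i $ k * ph $ j)"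
      by (rule sum.swap)
    also have "... = (\<Sum>j\<in>UNIV. (detD A (Q j)) / det A * ph$j)"
    proof (rule sum.cong[OF refl])
      fix j
      have "(\<Sum>k\<in>UNIV. \<Sum>i\<in>UNIV. B$k$i * Q j $ i $ k * ph $ j) = (\<Sum>i\<in>UNIV. \<Sum>k\<in>UNIV. B$k$i * Q j $ i $ k * ph $ j)"
        by (rule sum.swap)
      also have "... = (\<Sum>i\<in>UNIV. \<Sum>k\<in>UNIV. adj3 A $ k $ i * Q j $ i $ k) / det A * ph $ j"
        unfolding B_def by (simp add: sum_distrib_right sum_divide_distrib)
      finally show "(\<Sum>k\<in>UNIV. \<Sum>i\<in>UNIV. B$k$i * Q j $ i $ k * ph $ j) = (detD A (Q j)) / det A * ph$j"
        unfolding detD_def .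
    qed
    finally show ?thesis using d by (simp add: sum_divide_distrib[symmetric] power2_eq_square)
  qed
  finally show ?thesis by (simp add: sum.distrib[symmetric])
qed


lemma has_derivative_vec3:
  fixes f :: "'a::real_normed_vector \<Rightarrow> real^3"
  assumes "\<And>i. ((\<lambda>y. f y $ i) has_derivative (\<lambda>v. f' v $ i)) (at x)"
  shows "(f has_derivative f') (at x)"
proof -
  have "\<forall>b\<in>Basis. ((\<lambda>y. f y \<bullet> b) has_derivative (\<lambda>v. f' v \<bullet> b)) (at x within UNIV)"
  proof
    fix b :: "real^3" assume "b \<in> Basis"
    then obtain i where b: "b = axis i 1" using axis_inverse by blast
    show "((\<lambda>y. f y \<bullet> b) has_derivative (\<lambda>v. f' v \<bullet> b)) (at x within UNIV)"
      unfolding b inner_axis using assms[of i] by simp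
  qed
  then show ?thesis using has_derivative_componentwise_within by blast
qed

lemma det_deriv:
  fixes P :: "3 \<Rightarrow> 3 \<Rightarrow> 'a::real_normed_vector \<Rightarrow> real"
  assumes dP: "\<And>i j. (P i j has_derivative DP i j) (at x)"
  shows "((\<lambda>y. det (\<chi> i j. P i j y)) has_derivative (\<lambda>v. detD (\<chi> i j. P i j x) (\<chi> i j. DP i j v))) (at x)"
  unfolding det_3 detD_def
  apply (simp add: sum_3 adj3_def)
  apply (rule derivative_eq_intros dP refl)+
  apply (simp add: algebra_simps)
  done

lemma H_deriv:
  fixes P :: "3 \<Rightarrow> 3 \<Rightarrow> real^3 \<Rightarrow> real" and ph :: "real^3 \<Rightarrow> real^3"
  assumes dP: "\<And>i j. (P i j has_derivative DP i j) (at x)"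
    and dph: "(ph has_derivative Dph) (at x)"
    and nz: "det (\<chi> i j. P i j x) \<noteq> 0"
  shows "((\<lambda>y. (1 / det (\<chi> i j. P i j y)) *\<^sub>R ((\<chi> i j. P i j y) *v ph y)) has_derivative
     (\<lambda>v. \<chi> i. - (detD (\<chi> i j. P i j x) (\<chi> i j. DP i j v)) / (det (\<chi> i j. P i j x))^2 * ((\<chi> i j. P i j x) *v ph x)$i
        + (1 / det (\<chi> i j. P i j x)) * (((\<chi> i j. DP i j v) *v ph x)$i + ((\<chi> i j. P i j x) *v Dph v)$i))) (at x)"
proof (rule has_derivative_vec3)
  fix i :: 3
  have dd: "((\<lambda>y. det (\<chi> i j. P i j y)) has_derivative (\<lambda>v. detD (\<chi> i j. P i j x) (\<chi> i j. DP i j v))) (at x)"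
    by (rule det_deriv[OF dP])
  have dphj: "((\<lambda>y. ph y $ j) has_derivative (\<lambda>v. Dph v $ j)) (at x)" for j
    using bounded_linear.has_derivative[OF bounded_linear_vec_nth dph] .
  show "((\<lambda>y. ((1 / det (\<chi> i j. P i j y)) *\<^sub>R ((\<chi> i j. P i j y) *v ph y)) $ i) has_derivative
     (\<lambda>v. (\<chi> i. - (detD (\<chi> i j. P i j x) (\<chi> i j. DP i j v)) / (det (\<chi> i j. P i j x))^2 * ((\<chi> i j. P i j x) *v ph x)$i
        + (1 / det (\<chi> i j. P i j x)) * (((\<chi> i j. DP i j v) *v ph x)$i + ((\<chi> i j. P i j x) *v Dph v)$i)) $ i)) (at x)"
    apply (simp add: matrix_vector_mult_def)
    apply (rule derivative_eq_intros dd dP dphj refl nz | simp add: nz)+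
    apply (simp add: field_simps power2_eq_square sum_distrib_left sum.distrib)
    done
qed




lemma smooth_facts:
  assumes "smooth_on U F"
  shows "continuous_on U (\<lambda>x. F x $ i)"
    "x \<in> U \<Longrightarrow> (\<lambda>x. F x $ i) differentiable at x"
    "continuous_on U (\<lambda>x. frechet_derivative (\<lambda>x. F x $ i) (at x) (axis j 1))"
    "x \<in> U \<Longrightarrow> (\<lambda>x. frechet_derivative (\<lambda>x. F x $ i) (at x) (axis j 1)) differentiable at x"
    "continuous_on U (\<lambda>x. frechet_derivative (\<lambda>x. frechet_derivative (\<lambda>x. F x $ i) (at x) (axis j 1)) (at x) (axis k 1))"
proof -
  have "Ck_on (Suc (Suc 0)) U (\<lambda>x. F x $ i)" using assms unfolding smooth_on_def by blast
  then show "continuous_on U (\<lambda>x. F x $ i)"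
    "x \<in> U \<Longrightarrow> (\<lambda>x. F x $ i) differentiable at x"
    "continuous_on U (\<lambda>x. frechet_derivative (\<lambda>x. F x $ i) (at x) (axis j 1))"
    "x \<in> U \<Longrightarrow> (\<lambda>x. frechet_derivative (\<lambda>x. F x $ i) (at x) (axis j 1)) differentiable at x"
    "continuous_on U (\<lambda>x. frechet_derivative (\<lambda>x. frechet_derivative (\<lambda>x. F x $ i) (at x) (axis j 1)) (at x) (axis k 1))"
    by auto
qed

lemma F_deriv:
  assumes sm: "smooth_on U F" and x: "x \<in> U"
  shows "(F has_derivative (\<lambda>h. jac F x *v h)) (at x)"
    "jac F x $ i $ j = frechet_derivative (\<lambda>x. F x $ i) (at x) (axis j 1)"
proof -
  have "\<forall>b\<in>Basis. (\<lambda>x. F x \<bullet> b) differentiable at x within UNIV"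
  proof
    fix b :: "real^3" assume "b \<in> Basis"
    then obtain i where b: "b = axis i 1" using axis_inverse by blast
    show "(\<lambda>x. F x \<bullet> b) differentiable at x within UNIV"
      unfolding b inner_axis using smooth_facts(2)[OF sm x] by simp
  qed
  then have "F differentiable at x" using differentiable_componentwise_within by blast
  then have hD: "(F has_derivative frechet_derivative F (at x)) (at x)"
    using frechet_derivative_works by blast
  have lin: "linear (frechet_derivative F (at x))" using has_derivative_linear[OF hD] .
  have eq: "(\<lambda>h. jac F x *v h) = frechet_derivative F (at x)"
    unfolding jac_def using matrix_works lin linear_matrix_vector_mul_eq by blast
  show "(F has_derivative (\<lambda>h. jac F x *v h)) (at x)" unfolding eq by (rule hD)
  have "((\<lambda>x. F x $ i) has_derivative (\<lambda>h. frechet_derivative F (at x) h $ i)) (at x)"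
    using bounded_linear.has_derivative[OF bounded_linear_vec_nth hD] .
  then have "frechet_derivative (\<lambda>x. F x $ i) (at x) = (\<lambda>h. frechet_derivative F (at x) h $ i)"
    using frechet_derivative_at by metis
  then show "jac F x $ i $ j = frechet_derivative (\<lambda>x. F x $ i) (at x) (axis j 1)"
    unfolding jac_def matrix_def by simp
qed

lemma piola_core:
  assumes U: "open U" "cube \<subseteq> U" and sm: "smooth_on U F" and inj: "inj_on F cube"
    and dJ: "\<forall>\<xi>\<in>cube. det (jac F \<xi>) \<noteq> 0" and x0: "\<xi>0 \<in> box (- 1) 1"
    and d\<Phi>: "(\<Phi> has_derivative D\<Phi>) (at \<xi>0)"
  shows "\<exists>D. (piola F \<Phi> has_derivative D) (at (F \<xi>0)) \<and>
             (\<Sum>i\<in>UNIV. D (axis i 1) $ i) = (1 / det (jac F \<xi>0)) * (\<Sum>i\<in>UNIV. D\<Phi> (axis i 1) $ i)"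
proof -
  define P where "P i j y = frechet_derivative (\<lambda>x. F x $ i) (at y) (axis j 1)" for i j y
  have boxc: "box (- 1) (1::real^3) \<subseteq> cube" by (rule box_subset_cbox)
  have x0c: "\<xi>0 \<in> cube" using x0 boxc by blast
  have x0U: "\<xi>0 \<in> U" using x0c U by blast
  define J0 where "J0 = jac F \<xi>0"
  have d0: "det J0 \<noteq> 0" using dJ x0c unfolding J0_def by blast
  have Jeq: "jac F y = (\<chi> i j. P i j y)" if "y \<in> U" for y
    using F_deriv(2)[OF sm that] unfolding P_def by (simp add: vec_eq_iff)
  define B where "B = (1 / det J0) *\<^sub>R adj3 J0"
  define G where "G = inv_into cube F"
  have contF: "continuous_on U F"
    using F_deriv(1)[OF sm] has_derivative_continuous continuous_at_imp_continuous_on by blast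
  have dG: "(G has_derivative (\<lambda>y. B *v y)) (at (F \<xi>0))"
  proof (rule has_derivative_inverse_strong[OF open_box x0])
    show "continuous_on (box (- 1) 1) F" using contF boxc U continuous_on_subset by blast
    show "G (F x) = x" if "x \<in> box (- 1) 1" for x
      unfolding G_def using inv_into_f_f[OF inj] that boxc by blast
    show "(F has_derivative (\<lambda>h. J0 *v h)) (at \<xi>0)" unfolding J0_def by (rule F_deriv(1)[OF sm x0U])
    show "(\<lambda>h. J0 *v h) \<circ> (\<lambda>y. B *v y) = id"
      unfolding B_def by (simp add: fun_eq_iff matrix_vector_mul_assoc inv_right[OF d0])
  qed
  define H where "H \<eta> = (1 / det (jac F \<eta>)) *\<^sub>R (jac F \<eta> *v \<Phi> \<eta>)" for \<eta>
  have pH: "piola F \<Phi> = H \<circ> G" by (simp add: fun_eq_iff piola_def H_def G_def Let_def)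
  define DP where "DP i j = frechet_derivative (P i j) (at \<xi>0)" for i j
  have dP: "(P i j has_derivative DP i j) (at \<xi>0)" for i j
    unfolding DP_def using smooth_facts(4)[OF sm x0U] frechet_derivative_works unfolding P_def by blast
  have J0eq: "J0 = (\<chi> i j. P i j \<xi>0)" unfolding J0_def using Jeq[OF x0U] .
  define DH where "DH = (\<lambda>v. \<chi> i. - (detD (\<chi> i j. P i j \<xi>0) (\<chi> i j. DP i j v)) / (det (\<chi> i j. P i j \<xi>0))^2 * ((\<chi> i j. P i j \<xi>0) *v \<Phi> \<xi>0)$i
        + (1 / det (\<chi> i j. P i j \<xi>0)) * (((\<chi> i j. DP i j v) *v \<Phi> \<xi>0)$i + ((\<chi> i j. P i j \<xi>0) *v D\<Phi> v)$i))"
  have dH2: "((\<lambda>y. (1 / det (\<chi> i j. P i j y)) *\<^sub>R ((\<chi> i j. P i j y) *v \<Phi> y)) has_derivative DH) (at \<xi>0)"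
    unfolding DH_def by (rule H_deriv[OF dP d\<Phi>]) (use d0 J0eq in simp)
  have dH: "(H has_derivative DH) (at \<xi>0)"
    by (rule has_derivative_transform_within_open[OF dH2 U(1) x0U]) (simp add: H_def Jeq)
  have GF: "G (F \<xi>0) = \<xi>0" unfolding G_def using inv_into_f_f[OF inj x0c] .
  have dW: "(piola F \<Phi> has_derivative (DH \<circ> (\<lambda>y. B *v y))) (at (F \<xi>0))"
    unfolding pH by (rule diff_chain_at[OF dG]) (simp add: GF dH)
  have linDH: "linear DH" using has_derivative_linear[OF dH] .
  define Qm where "Qm k = (\<chi> i j. DP i j (axis k 1))" for k
  define M where "M = (\<chi> j k. D\<Phi> (axis k 1) $ j)"
  have colM: "column k M = D\<Phi> (axis k 1)" for k by (simp add: column_def M_def vec_eq_iff)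
  have sym: "Qm k $ i $ j = Qm j $ i $ k" for i j k
  proof -
    have "frechet_derivative (P i j) (at \<xi>0) (axis k 1) = frechet_derivative (P i k) (at \<xi>0) (axis j 1)"
      unfolding P_def
      by (rule clairaut[OF U(1) x0U]) (use smooth_facts[OF sm] in auto)
    then show ?thesis by (simp add: Qm_def DP_def)
  qed
  have Bcol: "B *v axis i 1 = (\<Sum>k\<in>UNIV. B$k$i *\<^sub>R axis k 1)" for i
    using exhaust_3[of i] by (auto simp: vec_eq_iff matrix_vector_mult_def sum_3 axis_def forall_3)
  have tr: "(\<Sum>i\<in>UNIV. (DH \<circ> (\<lambda>y. B *v y)) (axis i 1) $ i) = (\<Sum>i\<in>UNIV. \<Sum>k\<in>UNIV. B$k$i * DH (axis k 1) $ i)"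
    by (simp add: Bcol linear_sum[OF linDH] linear_scale[OF linDH] sum_component)
  have DHk: "DH (axis k 1) $ i = - (detD J0 (Qm k)) / (det J0)^2 * (J0 *v \<Phi> \<xi>0)$i
            + (1 / det J0) * ((Qm k *v \<Phi> \<xi>0)$i + (J0 *v (column k M))$i)" for i k
    unfolding DH_def colM Qm_def J0eq by simp
  have "(\<Sum>i\<in>UNIV. (DH \<circ> (\<lambda>y. B *v y)) (axis i 1) $ i) = (1 / det J0) * (\<Sum>j\<in>UNIV. M$j$j)"
  proof -
    have "(\<Sum>i\<in>UNIV. \<Sum>k\<in>UNIV. B$k$i * DH (axis k 1) $ i) = (1 / det J0) * (\<Sum>j\<in>UNIV. M$j$j)"
      unfolding DHk B_def by (rule piola_alg[OF d0 sym])
    then show ?thesis using tr by simp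
  qed
  then show ?thesis using dW unfolding J0_def M_def by auto
qed




lemma jacobiP_deriv_ex: "\<exists>D. ((\<lambda>x. jacobiP a b n x) has_real_derivative D) (at x)"
  unfolding jacobiP_def
  apply (rule exI)
  apply (rule DERIV_sum)
  apply (rule derivative_eq_intros refl | simp)+
  done

definition phiD :: "nat \<Rightarrow> real \<Rightarrow> real" where "phiD n x = (SOME D. (phi n has_real_derivative D) (at x))"
definition psiD :: "nat \<Rightarrow> real \<Rightarrow> real" where "psiD n x = (SOME D. (psi n has_real_derivative D) (at x))"

lemma dphi: "(phi n has_real_derivative phiD n x) (at x)"
proof -
  obtain D where "((\<lambda>x. jacobiP 0 0 n x) has_real_derivative D) (at x)" using jacobiP_deriv_ex by blast
  then have "(phi n has_real_derivative sqrt ((2 * real n + 1) / 2) * D) (at x)"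
    unfolding phi_def[abs_def] legendre_def by (rule DERIV_cmult)
  then show ?thesis unfolding phiD_def by (rule someI)
qed

lemma dpsi_gen: "(psi n has_real_derivative psiD n x) (at x)"
proof -
  obtain D where "((\<lambda>x. jacobiP (-1) (-1) n x) has_real_derivative D) (at x)" using jacobiP_deriv_ex by blast
  then have "(psi n has_real_derivative sqrt (2 * (2 * real n - 1)) / (real n - 1) * D) (at x)"
    unfolding psi_def[abs_def] by (rule DERIV_cmult)
  then show ?thesis unfolding psiD_def by (rule someI)
qed

lemma dpsi: assumes "m \<ge> 1" shows "(psi (Suc m) has_real_derivative phi m x) (at x)"
proof -
  have "(psi (Suc m) has_real_derivative sqrt (2 * (2 * real (Suc m) - 1)) / (real (Suc m) - 1) * (real m / 2 * legendre m x)) (at x)"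
    unfolding psi_def[abs_def] by (rule DERIV_cmult[OF jacobi_m1_deriv])
  moreover have "sqrt (2 * (2 * real (Suc m) - 1)) / (real (Suc m) - 1) * (real m / 2 * legendre m x) = phi m x"
  proof -
    have m: "real m \<noteq> 0" using assms by simp
    have "sqrt ((2 * real m + 1) / 2) = sqrt (2 * (2 * real m + 1) / 4)" by simp
    also have "... = sqrt (2 * (2 * real m + 1)) / 2" by (simp add: real_sqrt_divide)
    finally have s: "sqrt ((2 * real m + 1) / 2) = sqrt (2 * (2 * real m + 1)) / 2" .
    show ?thesis using m unfolding phi_def s by (simp add: field_simps)
  qed
  ultimately show ?thesis by simp
qed

lemma psi_bnd: "\<bar>x\<bar> = 1 \<Longrightarrow> psi (Suc m) x = 0"
proof -
  assume "\<bar>x\<bar> = 1"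
  then consider "x = 1" | "x = -1" by linarith
  then have "jacobiP (-1) (-1) (Suc m) x = 0"
  proof cases
    case 1
    have "jacobiP (-1) (-1) (Suc m) x = (\<Sum>s\<le>Suc m. (real m gchoose (Suc m - s)) * (real m gchoose s) * 0 ^ s * 1 ^ (Suc m - s))"
      unfolding jacobiP_def 1 by simp
    also have "... = 0"
      by (rule sum.neutral) (auto simp flip: binomial_gbinomial)
    finally show ?thesis .
  next
    case 2
    have "jacobiP (-1) (-1) (Suc m) x = (\<Sum>s\<le>Suc m. (real m gchoose (Suc m - s)) * (real m gchoose s) * (-1) ^ s * 0 ^ (Suc m - s))"
      unfolding jacobiP_def 2 by simp
    also have "... = 0"
    proof (rule sum.neutral, rule ballI)
      fix s assume "s \<in> {..Suc m}"
      then consider "s \<le> m" | "s = Suc m" by fastforce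
      then show "(real m gchoose (Suc m - s)) * (real m gchoose s) * (-1) ^ s * 0 ^ (Suc m - s) = 0"
        by cases (auto simp flip: binomial_gbinomial)
    qed
    finally show ?thesis .
  qed
  then show ?thesis unfolding psi_def by simp
qed

lemma comp_nth: "(g has_real_derivative g') (at (\<xi> $ i)) \<Longrightarrow> ((\<lambda>\<xi>. g (\<xi> $ i)) has_derivative (\<lambda>h. h $ i * g')) (at \<xi>)"
proof -
  assume g: "(g has_real_derivative g') (at (\<xi> $ i))"
  have "((\<lambda>\<xi>. \<xi> $ i) has_derivative (\<lambda>h. h $ i)) (at \<xi>)"
    by (rule bounded_linear_imp_has_derivative[OF bounded_linear_vec_nth])
  from DERIV_compose_FDERIV[OF g this] show ?thesis .
qed

lemma prod3_deriv:
  assumes "(f1 has_real_derivative f1') (at (\<xi> $ ia))" "(f2 has_real_derivative f2') (at (\<xi> $ ib))"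
    "(f3 has_real_derivative f3') (at (\<xi> $ ic))"
  shows "((\<lambda>\<xi>. f1 (\<xi> $ ia) * f2 (\<xi> $ ib) * f3 (\<xi> $ ic)) has_derivative
     (\<lambda>h. h $ ia * f1' * f2 (\<xi> $ ib) * f3 (\<xi> $ ic) + f1 (\<xi> $ ia) * (h $ ib * f2') * f3 (\<xi> $ ic)
          + f1 (\<xi> $ ia) * f2 (\<xi> $ ib) * (h $ ic * f3'))) (at \<xi>)"
  apply (rule derivative_eq_intros comp_nth[OF assms(1)] comp_nth[OF assms(2)] comp_nth[OF assms(3)] refl)+
  apply (simp add: algebra_simps)
  done

lemma prod2_deriv:
  assumes "(f1 has_real_derivative f1') (at (\<xi> $ ia))" "(f2 has_real_derivative f2') (at (\<xi> $ ib))"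
  shows "((\<lambda>\<xi>. f1 (\<xi> $ ia) * f2 (\<xi> $ ib)) has_derivative
     (\<lambda>h. h $ ia * f1' * f2 (\<xi> $ ib) + f1 (\<xi> $ ia) * (h $ ib * f2'))) (at \<xi>)"
  apply (rule derivative_eq_intros comp_nth[OF assms(1)] comp_nth[OF assms(2)] refl)+
  apply (simp add: algebra_simps)
  done

lemma vec3_deriv:
  assumes "(a has_derivative a') (at x)" "(b has_derivative b') (at x)" "(c has_derivative c') (at x)"
  shows "((\<lambda>y. vector [a y, b y, c y] :: real^3) has_derivative (\<lambda>v. vector [a' v, b' v, c' v])) (at x)"
proof (rule has_derivative_vec3)
  fix i :: 3
  show "((\<lambda>y. (vector [a y, b y, c y] :: real^3) $ i) has_derivative (\<lambda>v. (vector [a' v, b' v, c' v] :: real^3) $ i)) (at x)"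
    using exhaust_3[of i] assms by auto
qed

definition divfree :: "(real^3 \<Rightarrow> real^3) \<Rightarrow> bool" where
  "divfree \<Phi> = (\<forall>\<xi>. \<exists>D. (\<Phi> has_derivative D) (at \<xi>) \<and> (\<Sum>i\<in>UNIV. D (axis i 1) $ i) = 0)"

definition bndzero :: "(real^3 \<Rightarrow> real^3) \<Rightarrow> bool" where
  "bndzero \<Phi> = (\<forall>\<xi> i. \<bar>\<xi> $ i\<bar> = 1 \<longrightarrow> \<Phi> \<xi> $ i = 0)"

lemma divfree_vec3:
  assumes "\<And>\<xi>. \<exists>a' b' c'. (a has_derivative a') (at \<xi>) \<and> (b has_derivative b') (at \<xi>) \<and> (c has_derivative c') (at \<xi>)
              \<and> a' (axis 1 1) + b' (axis 2 1) + c' (axis 3 1) = 0"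
  shows "divfree (\<lambda>y. vector [a y, b y, c y])"
  unfolding divfree_def
proof
  fix \<xi>
  obtain a' b' c' where h: "(a has_derivative a') (at \<xi>)" "(b has_derivative b') (at \<xi>)" "(c has_derivative c') (at \<xi>)"
      "a' (axis 1 1) + b' (axis 2 1) + c' (axis 3 1) = 0" using assms by blast
  show "\<exists>D. ((\<lambda>y. vector [a y, b y, c y]) has_derivative D) (at \<xi>) \<and> (\<Sum>i\<in>UNIV. D (axis i 1) $ i) = 0"
    by (rule exI[of _ "\<lambda>v. vector [a' v, b' v, c' v]"]) (use vec3_deriv[OF h(1-3)] h(4) in \<open>simp add: sum_3\<close>)
qed

lemma ax: "axis (1::3) (1::real) $ 1 = 1" "axis (1::3) (1::real) $ 2 = 0" "axis (1::3) (1::real) $ 3 = 0"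
  "axis (2::3) (1::real) $ 1 = 0" "axis (2::3) (1::real) $ 2 = 1" "axis (2::3) (1::real) $ 3 = 0"
  "axis (3::3) (1::real) $ 1 = 0" "axis (3::3) (1::real) $ 2 = 0" "axis (3::3) (1::real) $ 3 = 1"
  by (simp_all add: axis_def)

lemma Phi1_good: assumes "m \<ge> 1" "n \<ge> 1" shows "divfree (Phi1 m n l)" "bndzero (Phi1 m n l)"
proof -
  have e: "Phi1 m n l = (\<lambda>\<xi>. vector [psi (Suc m) (\<xi>$1) * phi n (\<xi>$2) * phi l (\<xi>$3),
 - (phi m (\<xi>$1) * psi (Suc n) (\<xi>$2) * phi l (\<xi>$3)), 0])"
    by (simp add: fun_eq_iff Phi1_def)
  show "divfree (Phi1 m n l)" unfolding e
    apply (rule divfree_vec3)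
    subgoal for \<xi>
      using prod3_deriv[where \<xi>=\<xi> and ia=1 and ib=2 and ic=3, OF dpsi[OF assms(1)] dphi[of n] dphi[of l]]
        has_derivative_minus[OF prod3_deriv[where \<xi>=\<xi> and ia=1 and ib=2 and ic=3, OF dphi[of m] dpsi[OF assms(2)] dphi[of l]]]
        has_derivative_const[of 0 "at \<xi>"]
      by - (rule exI, rule exI, rule exI, intro conjI, assumption, assumption, assumption, simp add: ax)
    done
  show "bndzero (Phi1 m n l)" unfolding bndzero_def e
    apply (intro allI impI)
    subgoal for \<xi> i using exhaust_3[of i] by (elim disjE) (simp_all add: psi_bnd)
    done
qed

lemma Phi2_good: assumes "m \<ge> 1" "l \<ge> 1" shows "divfree (Phi2 m n l)" "bndzero (Phi2 m n l)"
proof -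
  have e: "Phi2 m n l = (\<lambda>\<xi>. vector [psi (Suc m) (\<xi>$1) * phi n (\<xi>$2) * phi l (\<xi>$3), 0,
 - (phi m (\<xi>$1) * phi n (\<xi>$2) * psi (Suc l) (\<xi>$3))])"
    by (simp add: fun_eq_iff Phi2_def)
  show "divfree (Phi2 m n l)" unfolding e
    apply (rule divfree_vec3)
    subgoal for \<xi>
      using prod3_deriv[where \<xi>=\<xi> and ia=1 and ib=2 and ic=3, OF dpsi[OF assms(1)] dphi[of n] dphi[of l]]
        has_derivative_const[of 0 "at \<xi>"]
        has_derivative_minus[OF prod3_deriv[where \<xi>=\<xi> and ia=1 and ib=2 and ic=3, OF dphi[of m] dphi[of n] dpsi[OF assms(2)]]]
      by - (rule exI, rule exI, rule exI, intro conjI, assumption, assumption, assumption, simp add: ax)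
    done
  show "bndzero (Phi2 m n l)" unfolding bndzero_def e
    apply (intro allI impI)
    subgoal for \<xi> i using exhaust_3[of i] by (elim disjE) (simp_all add: psi_bnd)
    done
qed

lemma PhiX_good: assumes "n \<ge> 1" "l \<ge> 1" shows "divfree (PhiX n l)" "bndzero (PhiX n l)"
proof -
  have e: "PhiX n l = (\<lambda>\<xi>. vector [0, psi (Suc n) (\<xi>$2) * phi l (\<xi>$3),
 - (phi n (\<xi>$2) * psi (Suc l) (\<xi>$3))])"
    by (simp add: fun_eq_iff PhiX_def)
  show "divfree (PhiX n l)" unfolding e
    apply (rule divfree_vec3)
    subgoal for \<xi>
      using has_derivative_const[of 0 "at \<xi>"]
        prod2_deriv[where \<xi>=\<xi> and ia=2 and ib=3, OF dpsi[OF assms(1)] dphi[of l]]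
        has_derivative_minus[OF prod2_deriv[where \<xi>=\<xi> and ia=2 and ib=3, OF dphi[of n] dpsi[OF assms(2)]]]
      by - (rule exI, rule exI, rule exI, intro conjI, assumption, assumption, assumption, simp add: ax)
    done
  show "bndzero (PhiX n l)" unfolding bndzero_def e
    apply (intro allI impI)
    subgoal for \<xi> i using exhaust_3[of i] by (elim disjE) (simp_all add: psi_bnd)
    done
qed

lemma PhiY_good: assumes "m \<ge> 1" "l \<ge> 1" shows "divfree (PhiY m l)" "bndzero (PhiY m l)"
proof -
  have e: "PhiY m l = (\<lambda>\<xi>. vector [psi (Suc m) (\<xi>$1) * phi l (\<xi>$3), 0,
 - (phi m (\<xi>$1) * psi (Suc l) (\<xi>$3))])"
    by (simp add: fun_eq_iff PhiY_def)
  show "divfree (PhiY m l)" unfolding e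
    apply (rule divfree_vec3)
    subgoal for \<xi>
      using prod2_deriv[where \<xi>=\<xi> and ia=1 and ib=3, OF dpsi[OF assms(1)] dphi[of l]]
        has_derivative_const[of 0 "at \<xi>"]
        has_derivative_minus[OF prod2_deriv[where \<xi>=\<xi> and ia=1 and ib=3, OF dphi[of m] dpsi[OF assms(2)]]]
      by - (rule exI, rule exI, rule exI, intro conjI, assumption, assumption, assumption, simp add: ax)
    done
  show "bndzero (PhiY m l)" unfolding bndzero_def e
    apply (intro allI impI)
    subgoal for \<xi> i using exhaust_3[of i] by (elim disjE) (simp_all add: psi_bnd)
    done
qed

lemma PhiZ_good: assumes "m \<ge> 1" "n \<ge> 1" shows "divfree (PhiZ m n)" "bndzero (PhiZ m n)"
proof -
  have e: "PhiZ m n = (\<lambda>\<xi>. vector [psi (Suc m) (\<xi>$1) * phi n (\<xi>$2),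
 - (phi m (\<xi>$1) * psi (Suc n) (\<xi>$2)), 0])"
    by (simp add: fun_eq_iff PhiZ_def)
  show "divfree (PhiZ m n)" unfolding e
    apply (rule divfree_vec3)
    subgoal for \<xi>
      using prod2_deriv[where \<xi>=\<xi> and ia=1 and ib=2, OF dpsi[OF assms(1)] dphi[of n]]
        has_derivative_minus[OF prod2_deriv[where \<xi>=\<xi> and ia=1 and ib=2, OF dphi[of m] dpsi[OF assms(2)]]]
        has_derivative_const[of 0 "at \<xi>"]
      by - (rule exI, rule exI, rule exI, intro conjI, assumption, assumption, assumption, simp add: ax)
    done
  show "bndzero (PhiZ m n)" unfolding bndzero_def e
    apply (intro allI impI)
    subgoal for \<xi> i using exhaust_3[of i] by (elim disjE) (simp_all add: psi_bnd)
    done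
qed




lemma cross_det: "cross3 (A *v a) (A *v b) \<bullet> (A *v c) = det A * (cross3 a b \<bullet> c)"
  by (simp add: cross3_simps matrix_vector_mult_def)

lemma cross_axis:
  fixes w :: "real^3"
  assumes "j \<noteq> i" "k \<noteq> i" "w $ i = 0"
  shows "cross3 (axis j 1) (axis k 1) \<bullet> w = 0"
  using exhaust_3[of i] exhaust_3[of j] exhaust_3[of k] assms
  by (auto simp: cross3_simps axis_def)

lemma piola_cont:
  assumes U: "open U" "cube \<subseteq> U" and sm: "smooth_on U F" and inj: "inj_on F cube"
    and dJ: "\<forall>\<xi>\<in>cube. det (jac F \<xi>) \<noteq> 0" and c\<Phi>: "continuous_on UNIV \<Phi>"
  shows "continuous_on (F ` cube) (piola F \<Phi>)"
proof -
  define P where "P i j y = frechet_derivative (\<lambda>x. F x $ i) (at y) (axis j 1)" for i j y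
  have Jeq: "jac F y = (\<chi> i j. P i j y)" if "y \<in> U" for y
    using F_deriv(2)[OF sm that] unfolding P_def by (simp add: vec_eq_iff)
  have contF: "continuous_on cube F"
    using F_deriv(1)[OF sm] U has_derivative_continuous continuous_at_imp_continuous_on
    by (metis subsetD)
  define G where "G = inv_into cube F"
  have cG: "continuous_on (F ` cube) G"
    by (rule continuous_on_inv[OF contF compact_cbox]) (simp add: G_def inv_into_f_f[OF inj])
  have GF: "G ` (F ` cube) = cube" by (simp add: G_def image_image inv_into_f_f[OF inj])
  define H where "H \<eta> = (1 / det (jac F \<eta>)) *\<^sub>R (jac F \<eta> *v \<Phi> \<eta>)" for \<eta>
  have pH: "piola F \<Phi> = H \<circ> G" by (simp add: fun_eq_iff piola_def H_def G_def Let_def)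
  have cP: "continuous_on cube (P i j)" for i j
    using smooth_facts(3)[OF sm] U(2) continuous_on_subset unfolding P_def by blast
  have c\<Phi>': "continuous_on cube (\<lambda>y. \<Phi> y $ j)" for j
    using c\<Phi> continuous_on_subset continuous_on_component by blast
  define H2 where "H2 \<eta> = (1 / det (\<chi> i j. P i j \<eta>)) *\<^sub>R (\<chi> i. \<Sum>j\<in>UNIV. P i j \<eta> * \<Phi> \<eta> $ j)" for \<eta>
  have detnz: "det (\<chi> i j. P i j \<eta>) \<noteq> 0" if "\<eta> \<in> cube" for \<eta>
  proof -
    have "\<eta> \<in> U" using that U(2) by blast
    moreover have "det (jac F \<eta>) \<noteq> 0" using dJ that by blast
    ultimately show ?thesis using Jeq[of \<eta>] by simp
  qed
  have cdet: "continuous_on cube (\<lambda>\<eta>. det (\<chi> i j. P i j \<eta>))"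
    unfolding det_3 by (simp, intro continuous_intros cP)
  have cH2: "continuous_on cube H2"
    unfolding H2_def
    by (intro continuous_intros cP c\<Phi>' cdet) (use detnz in auto)
  have cH: "continuous_on cube H"
    using cH2 by (rule continuous_on_cong[THEN iffD1, rotated 2])
      (use U(2) Jeq in \<open>auto simp: H_def H2_def matrix_vector_mult_def\<close>)
  show ?thesis unfolding pH
    by (rule continuous_on_compose[OF cG]) (simp add: GF cH)
qed




lemma basis_good: assumes "b \<in> basisN N F" shows "\<exists>\<Phi>. b = piola F \<Phi> \<and> divfree \<Phi> \<and> bndzero \<Phi>"
proof -
  obtain \<Phi> where b: "b = piola F \<Phi>" and \<Phi>: "\<Phi> \<in> ({Phi1 m n l | m n l. m \<in> {1..N-1} \<and> n \<in> {1..N-1} \<and> l \<in> {1..N-1}}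
    \<union> {Phi2 m n l | m n l. m \<in> {1..N-1} \<and> n \<in> {1..N-1} \<and> l \<in> {1..N-1}}
    \<union> {PhiX n l | n l. n \<in> {1..N-1} \<and> l \<in> {1..N-1}}
    \<union> {PhiY m l | m l. m \<in> {1..N-1} \<and> l \<in> {1..N-1}}
    \<union> {PhiZ m n | m n. m \<in> {1..N-1} \<and> n \<in> {1..N-1}})"
    using assms unfolding basisN_def by blast
  have "divfree \<Phi> \<and> bndzero \<Phi>" using \<Phi>
    by (auto simp: Phi1_good Phi2_good PhiX_good PhiY_good PhiZ_good)
  then show ?thesis using b by blast
qed

lemma divfree_cont: "divfree \<Phi> \<Longrightarrow> continuous_on UNIV \<Phi>"
  unfolding divfree_def
  by (meson continuous_at_imp_continuous_on has_derivative_continuous)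

theorem proposition2p4:
  fixes N :: nat and F :: "real^3 \<Rightarrow> real^3" and U :: "(real^3) set"
  assumes "N \<ge> 2"
    and "open U" and "cube \<subseteq> U"
    and "smooth_on U F"
    and "inj_on F cube"
    and "\<forall>\<xi>\<in>cube. det (jac F \<xi>) \<noteq> 0"
  shows "\<forall>v \<in> HN0_div0 N F.
           continuous_on (F ` cube) v
         \<and> (\<forall>x \<in> F ` open_cube. v differentiable (at x) \<and> divergence v x = 0)
         \<and> (\<forall>\<xi> \<in> cube. \<forall>i. \<bar>\<xi> $ i\<bar> = 1 \<longrightarrow>
               (\<forall>j k. j \<noteq> i \<longrightarrow> k \<noteq> i \<longrightarrow>
                  (cross3 (jac F \<xi> *v axis j 1) (jac F \<xi> *v axis k 1)) \<bullet> v (F \<xi>) = 0))"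
proof
  fix v assume "v \<in> HN0_div0 N F"
  then obtain S c where S: "finite S" "S \<subseteq> basisN N F" and v: "v = (\<lambda>x. \<Sum>b\<in>S. c b *\<^sub>R b x)"
    unfolding HN0_div0_def fspan_def by blast
  have good: "\<exists>\<Phi>. b = piola F \<Phi> \<and> divfree \<Phi> \<and> bndzero \<Phi>" if "b \<in> S" for b
    using basis_good S(2) that by blast
  have cont_b: "continuous_on (F ` cube) b" if "b \<in> S" for b
    using good[OF that] piola_cont[OF assms(2-6)] divfree_cont by blast
  show "continuous_on (F ` cube) v
         \<and> (\<forall>x \<in> F ` open_cube. v differentiable (at x) \<and> divergence v x = 0)
         \<and> (\<forall>\<xi> \<in> cube. \<forall>i. \<bar>\<xi> $ i\<bar> = 1 \<longrightarrow>
               (\<forall>j k. j \<noteq> i \<longrightarrow> k \<noteq> i \<longrightarrow>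
                  (cross3 (jac F \<xi> *v axis j 1) (jac F \<xi> *v axis k 1)) \<bullet> v (F \<xi>) = 0))"
  proof (intro conjI ballI allI impI)
    show "continuous_on (F ` cube) v"
      unfolding v by (intro continuous_intros cont_b)
  next
    fix x assume "x \<in> F ` open_cube"
    then obtain \<xi>0 where x0: "\<xi>0 \<in> box (- 1) 1" and x: "x = F \<xi>0" by blast
    have "\<exists>D. (b has_derivative D) (at x) \<and> (\<Sum>i\<in>UNIV. D (axis i 1) $ i) = 0" if bS: "b \<in> S" for b
    proof -
      obtain \<Phi> where b: "b = piola F \<Phi>" and df: "divfree \<Phi>" using good[OF bS] by blast
      obtain D\<Phi> where dP: "(\<Phi> has_derivative D\<Phi>) (at \<xi>0)" and t: "(\<Sum>i\<in>UNIV. D\<Phi> (axis i 1) $ i) = 0"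
        using df unfolding divfree_def by blast
      from piola_core[OF assms(2-6) x0 dP] t show ?thesis unfolding b x by auto
    qed
    then obtain Db where Db: "\<And>b. b \<in> S \<Longrightarrow> (b has_derivative Db b) (at x) \<and> (\<Sum>i\<in>UNIV. Db b (axis i 1) $ i) = 0"
      by metis
    have dv: "(v has_derivative (\<lambda>h. \<Sum>b\<in>S. c b *\<^sub>R Db b h)) (at x)"
      unfolding v by (intro has_derivative_sum has_derivative_scaleR_right) (use Db in blast)
    then show "v differentiable (at x)" unfolding differentiable_def by blast
    have "frechet_derivative v (at x) = (\<lambda>h. \<Sum>b\<in>S. c b *\<^sub>R Db b h)"
      using frechet_derivative_at[OF dv] by simp
    then have "divergence v x = (\<Sum>i\<in>UNIV. \<Sum>b\<in>S. c b * Db b (axis i 1) $ i)"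
      unfolding divergence_def by (simp add: sum_component)
    also have "... = (\<Sum>b\<in>S. c b * (\<Sum>i\<in>UNIV. Db b (axis i 1) $ i))"
      by (subst sum.swap) (simp add: sum_distrib_left)
    also have "... = 0" using Db by simp
    finally show "divergence v x = 0" .
  next
    fix \<xi> i j k assume \<xi>: "\<xi> \<in> cube" and bi: "\<bar>\<xi> $ i\<bar> = 1" and ji: "j \<noteq> i" and ki: "k \<noteq> i"
    define J where "J = jac F \<xi>"
    have "cross3 (J *v axis j 1) (J *v axis k 1) \<bullet> b (F \<xi>) = 0" if bS: "b \<in> S" for b
    proof -
      obtain \<Phi> where b: "b = piola F \<Phi>" and bz: "bndzero \<Phi>" using good[OF bS] by blast
      have "b (F \<xi>) = (1 / det J) *\<^sub>R (J *v \<Phi> \<xi>)"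
        unfolding b piola_def J_def using inv_into_f_f[OF assms(5) \<xi>] by simp
      then have "cross3 (J *v axis j 1) (J *v axis k 1) \<bullet> b (F \<xi>)
          = (1 / det J) * (det J * (cross3 (axis j 1) (axis k 1) \<bullet> \<Phi> \<xi>))"
        by (simp add: cross_det)
      also have "cross3 (axis j 1) (axis k 1) \<bullet> \<Phi> \<xi> = 0"
        using cross_axis[OF ji ki] bz bi unfolding bndzero_def by blast
      finally show ?thesis by simp
    qed
    then show "cross3 (jac F \<xi> *v axis j 1) (jac F \<xi> *v axis k 1) \<bullet> v (F \<xi>) = 0"
      unfolding v J_def by (simp add: inner_sum_right)
  qed
qed


end
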